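(* Let $R$ be one of the chain rings $\mathbb{G}_4=\mathbb{Z}_4[X]/(X^2+X+1)$, $\mathbb{S}_4=\mathbb{F}_4[X]/(X^2)$, $\mathbb{T}_4=\mathbb{F}_4[X;a\mapsto a^2]/(X^2)$. Then there exists a projective $(201,13)$-arc in $\mathrm{PHG}(2,R)$.
   Context: $\mathbb{F}_4[X;a\mapsto a^2]$ denotes the skew polynomial ring with commutation rule $Xa=a^2X$. For a finite chain ring $R$ of length $2$ with residue field $\mathbb{F}_q$, the projective Hjelmslev plane $\mathrm{PHG}(2,R)$ is the incidence structure whose points are the free rank-$1$ submodules of the right module $R_R^3$, whose lines are the free rank-$2$ submodules of $R_R^3$, with incidence given by inclusion. A projective $(k,n)$-arc is a set of $k$ points meeting every line in at most $n$ points. *)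

theory Defs
  imports "HOL-Algebra.Ring"
begin

type_synonym 'a vec3 = "'a \<times> 'a \<times> 'a"

definition vec3_carrier :: "('a, 'm) ring_scheme \<Rightarrow> 'a vec3 set" where
  "vec3_carrier R = carrier R \<times> carrier R \<times> carrier R"

definition vzero :: "('a, 'm) ring_scheme \<Rightarrow> 'a vec3" where
  "vzero R = (\<zero>\<^bsub>R\<^esub>, \<zero>\<^bsub>R\<^esub>, \<zero>\<^bsub>R\<^esub>)"

definition vadd :: "('a, 'm) ring_scheme \<Rightarrow> 'a vec3 \<Rightarrow> 'a vec3 \<Rightarrow> 'a vec3" where
  "vadd R x y = (case x of (x1, x2, x3) \<Rightarrow> case y of (y1, y2, y3) \<Rightarrow>
      (x1 \<oplus>\<^bsub>R\<^esub> y1, x2 \<oplus>\<^bsub>R\<^esub> y2, x3 \<oplus>\<^bsub>R\<^esub> y3))"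

definition rsmult :: "('a, 'm) ring_scheme \<Rightarrow> 'a vec3 \<Rightarrow> 'a \<Rightarrow> 'a vec3" where
  "rsmult R x r = (case x of (x1, x2, x3) \<Rightarrow>
      (x1 \<otimes>\<^bsub>R\<^esub> r, x2 \<otimes>\<^bsub>R\<^esub> r, x3 \<otimes>\<^bsub>R\<^esub> r))"

definition free_rank1_submodule :: "('a, 'm) ring_scheme \<Rightarrow> 'a vec3 set \<Rightarrow> bool" where
  "free_rank1_submodule R S \<longleftrightarrow>
     (\<exists>x \<in> vec3_carrier R.
        (\<forall>r \<in> carrier R. rsmult R x r = vzero R \<longrightarrow> r = \<zero>\<^bsub>R\<^esub>) \<and>
        S = {rsmult R x r | r. r \<in> carrier R})"

definition free_rank2_submodule :: "('a, 'm) ring_scheme \<Rightarrow> 'a vec3 set \<Rightarrow> bool" where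
  "free_rank2_submodule R S \<longleftrightarrow>
     (\<exists>x \<in> vec3_carrier R. \<exists>y \<in> vec3_carrier R.
        (\<forall>r \<in> carrier R. \<forall>s \<in> carrier R.
            vadd R (rsmult R x r) (rsmult R y s) = vzero R \<longrightarrow> r = \<zero>\<^bsub>R\<^esub> \<and> s = \<zero>\<^bsub>R\<^esub>) \<and>
        S = {vadd R (rsmult R x r) (rsmult R y s) | r s. r \<in> carrier R \<and> s \<in> carrier R})"

definition PHG_points :: "('a, 'm) ring_scheme \<Rightarrow> 'a vec3 set set" where
  "PHG_points R = {S. free_rank1_submodule R S}"

definition PHG_lines :: "('a, 'm) ring_scheme \<Rightarrow> 'a vec3 set set" where
  "PHG_lines R = {S. free_rank2_submodule R S}"

definition projective_arc :: "('a, 'm) ring_scheme \<Rightarrow> 'a vec3 set set \<Rightarrow> nat \<Rightarrow> nat \<Rightarrow> bool" where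
  "projective_arc R A k n \<longleftrightarrow>
     A \<subseteq> PHG_points R \<and> finite A \<and> card A = k \<and>
     (\<forall>L \<in> PHG_lines R. card {P \<in> A. P \<subseteq> L} \<le> n)"

text \<open>Elements 0,1,2,3 encode 0, 1, w, w+1 = w^2 (binary coordinates over F_2);
  addition is bitwise xor, multiplication via discrete logarithm (a = w^(a-1) for a \<noteq> 0).\<close>
definition f4add :: "nat \<Rightarrow> nat \<Rightarrow> nat" where
  "f4add a b = xor a b"

definition f4mul :: "nat \<Rightarrow> nat \<Rightarrow> nat" where
  "f4mul a b = (if a = 0 \<or> b = 0 then 0 else ((a - 1) + (b - 1)) mod 3 + 1)"

text \<open>G_4 = Z_4[X]/(X^2+X+1): (a,b) = a + b w, a,b in Z_4, w^2 = -w - 1.\<close>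
definition G4 :: "(nat \<times> nat) ring" where
  "G4 = \<lparr> carrier = {0..<4} \<times> {0..<4},
          mult = (\<lambda>(a,b) (c,d). ((a*c + 3*b*d) mod 4, (a*d + b*c + 3*b*d) mod 4)),
          one = (1, 0),
          zero = (0, 0),
          add = (\<lambda>(a,b) (c,d). ((a + c) mod 4, (b + d) mod 4)) \<rparr>"

text \<open>S_4 = F_4[X]/(X^2): (a,b) = a + b X.\<close>
definition S4 :: "(nat \<times> nat) ring" where
  "S4 = \<lparr> carrier = {0..<4} \<times> {0..<4},
          mult = (\<lambda>(a,b) (c,d). (f4mul a c, f4add (f4mul a d) (f4mul b c))),
          one = (1, 0),
          zero = (0, 0),
          add = (\<lambda>(a,b) (c,d). (f4add a c, f4add b d)) \<rparr>"

text \<open>T_4 = F_4[X; a \<mapsto> a^2]/(X^2), X a = a^2 X: (a + bX)(c + dX) = ac + (ad + b c^2) X.\<close>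
definition T4 :: "(nat \<times> nat) ring" where
  "T4 = \<lparr> carrier = {0..<4} \<times> {0..<4},
          mult = (\<lambda>(a,b) (c,d). (f4mul a c, f4add (f4mul a d) (f4mul b (f4mul c c)))),
          one = (1, 0),
          zero = (0, 0),
          add = (\<lambda>(a,b) (c,d). (f4add a c, f4add b d)) \<rparr>"

end

theory Submission
  imports Defs
begin

definition co :: "'a vec3 \<Rightarrow> nat \<Rightarrow> 'a" where
  "co v i = (if i = 0 then fst v else if i = 1 then fst (snd v) else snd (snd v))"

lemma co_simps [simp]: "co (a,b,c) 0 = a" "co (a,b,c) 1 = b" "co (a,b,c) 2 = c" "co (a,b,c) (Suc 0) = b"
  by (simp_all add: co_def)

lemma vec3_eqI: "co x 0 = co y 0 \<Longrightarrow> co x 1 = co y 1 \<Longrightarrow> co x 2 = co y 2 \<Longrightarrow> x = y"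
  by (cases x; cases y) (simp add: co_def)

lemma co_vadd [simp]: "co (vadd R x y) l = co x l \<oplus>\<^bsub>R\<^esub> co y l"
  by (cases x; cases y) (simp add: co_def vadd_def)

lemma co_rsmult [simp]: "co (rsmult R x r) l = co x l \<otimes>\<^bsub>R\<^esub> r"
  by (cases x) (simp add: co_def rsmult_def)

lemma co_vzero [simp]: "co (vzero R) l = \<zero>\<^bsub>R\<^esub>"
  by (simp add: co_def vzero_def)

lemma vec3_carrier_co: "x \<in> vec3_carrier R \<longleftrightarrow> (co x 0 \<in> carrier R \<and> co x 1 \<in> carrier R \<and> co x 2 \<in> carrier R)"
  by (cases x) (simp add: vec3_carrier_def)

lemma co_carrier: "x \<in> vec3_carrier R \<Longrightarrow> co x l \<in> carrier R"
  by (cases x) (auto simp: vec3_carrier_def co_def)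

definition Nf :: "('a, 'm) ring_scheme \<Rightarrow> nat \<Rightarrow> nat \<Rightarrow> nat \<Rightarrow> 'a \<Rightarrow> 'a \<Rightarrow> 'a vec3 set" where
  "Nf R i j k a b = {v \<in> vec3_carrier R. co v k = a \<otimes>\<^bsub>R\<^esub> co v i \<oplus>\<^bsub>R\<^esub> b \<otimes>\<^bsub>R\<^esub> co v j}"

definition span1 :: "('a, 'm) ring_scheme \<Rightarrow> 'a vec3 \<Rightarrow> 'a vec3 set" where
  "span1 R p = {rsmult R p r | r. r \<in> carrier R}"

definition idxo :: "'a \<Rightarrow> 'a vec3 \<Rightarrow> nat" where
  "idxo o1 p = (if co p 0 = o1 then 0 else if co p 1 = o1 then 1 else 2)"

definition idx :: "('a, 'm) ring_scheme \<Rightarrow> 'a vec3 \<Rightarrow> nat" where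
  "idx R p = idxo \<one>\<^bsub>R\<^esub> p"

context ring
begin

lemma vadd_closed [simp]: "x \<in> vec3_carrier R \<Longrightarrow> y \<in> vec3_carrier R \<Longrightarrow> vadd R x y \<in> vec3_carrier R"
  unfolding vec3_carrier_co[of "vadd R x y"] by (simp add: co_carrier)

lemma rsmult_closed [simp]: "x \<in> vec3_carrier R \<Longrightarrow> r \<in> carrier R \<Longrightarrow> rsmult R x r \<in> vec3_carrier R"
  unfolding vec3_carrier_co[of "rsmult R x r"] by (simp add: co_carrier)

lemma Nf_vadd:
  assumes "a \<in> carrier R" "b \<in> carrier R" "v \<in> Nf R i j k a b" "w \<in> Nf R i j k a b"
  shows "vadd R v w \<in> Nf R i j k a b"
proof -
  have v: "v \<in> vec3_carrier R" and w: "w \<in> vec3_carrier R"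
    and ev: "co v k = a \<otimes> co v i \<oplus> b \<otimes> co v j" and ew: "co w k = a \<otimes> co w i \<oplus> b \<otimes> co w j"
    using assms(3,4) by (auto simp: Nf_def)
  show ?thesis using v w assms(1,2) unfolding Nf_def
    by (simp add: ev ew r_distr a_ac co_carrier)
qed

lemma Nf_rsmult:
  assumes "a \<in> carrier R" "b \<in> carrier R" "v \<in> Nf R i j k a b" "r \<in> carrier R"
  shows "rsmult R v r \<in> Nf R i j k a b"
proof -
  have v: "v \<in> vec3_carrier R"
    and ev: "co v k = a \<otimes> co v i \<oplus> b \<otimes> co v j"
    using assms(3) by (auto simp: Nf_def)
  show ?thesis using v assms(1,2,4) unfolding Nf_def
    by (simp add: ev l_distr m_assoc co_carrier)
qed

lemma Nf_swap: "a \<in> carrier R \<Longrightarrow> b \<in> carrier R \<Longrightarrow> Nf R i j k a b = Nf R j i k b a"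
  unfolding Nf_def by (auto simp: a_comm co_carrier)

lemma unit_coord:
  assumes t: "t \<in> carrier R" "t \<noteq> \<zero>"
    and cls: "\<And>z. z \<in> carrier R \<Longrightarrow> z \<in> Units R \<or> z \<otimes> t = \<zero>"
    and v: "v \<in> vec3_carrier R"
    and B: "\<And>r. r \<in> carrier R \<Longrightarrow> rsmult R v r = vzero R \<Longrightarrow> r = \<zero>"
  shows "\<exists>l. l < 3 \<and> co v l \<in> Units R"
proof (rule ccontr)
  assume "\<not> ?thesis"
  then have n0: "co v 0 \<notin> Units R" and n1: "co v 1 \<notin> Units R" and n2: "co v 2 \<notin> Units R"
    by auto
  have "co v 0 \<otimes> t = \<zero>" using cls[of "co v 0"] n0 co_carrier[OF v] by simp
  moreover have "co v 1 \<otimes> t = \<zero>" using cls[of "co v 1"] n1 co_carrier[OF v] by simp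
  moreover have "co v 2 \<otimes> t = \<zero>" using cls[of "co v 2"] n2 co_carrier[OF v] by simp
  ultimately have "rsmult R v t = vzero R" by (intro vec3_eqI) simp_all
  then show False using B t by blast
qed


lemma id_cancel: "p \<in> carrier R \<Longrightarrow> q \<in> carrier R \<Longrightarrow> e \<in> carrier R \<Longrightarrow> (p \<oplus> q \<otimes> \<ominus> e) \<oplus> q \<otimes> e = p"
  by (simp add: r_minus a_assoc l_neg)

lemma id_unit: "p \<in> carrier R \<Longrightarrow> u \<in> Units R \<Longrightarrow> p \<otimes> inv u \<otimes> u = p"
  by (simp add: m_assoc Units_closed Units_inv_closed)

lemma zero_not_unit:
  assumes "t \<in> carrier R" "t \<noteq> \<zero>" shows "\<zero> \<notin> Units R"
proof
  assume "\<zero> \<in> Units R"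
  then obtain w where "w \<in> carrier R" "\<zero> \<otimes> w = \<one>" unfolding Units_def by blast
  then have "\<one> = \<zero>" by simp
  then have "t = t \<otimes> \<zero>" using assms(1) by (metis r_one)
  then show False using assms by simp
qed

lemma pick_form: "(i,j,k) \<in> F \<Longrightarrow> a \<in> C \<Longrightarrow> b \<in> C \<Longrightarrow> L \<subseteq> N i j k a b \<Longrightarrow>
  \<exists>i j k a b. (i,j,k) \<in> F \<and> a \<in> C \<and> b \<in> C \<and> L \<subseteq> N i j k a b"
  by blast

lemma line_sub_Nf:
  assumes t: "t \<in> carrier R" "t \<noteq> \<zero>"
    and cls: "\<And>z. z \<in> carrier R \<Longrightarrow> z \<in> Units R \<or> z \<otimes> t = \<zero>"
    and L: "free_rank2_submodule R L"
  shows "\<exists>i j k a b. (i,j,k) \<in> {(0,1,2),(0,2,1),(1,2,0)} \<and> a \<in> carrier R \<and> b \<in> carrier R \<and> L \<subseteq> Nf R i j k a b"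
proof -
  obtain x y where x: "x \<in> vec3_carrier R" and y: "y \<in> vec3_carrier R"
    and B: "\<And>r s. r \<in> carrier R \<Longrightarrow> s \<in> carrier R \<Longrightarrow> vadd R (rsmult R x r) (rsmult R y s) = vzero R \<Longrightarrow> r = \<zero> \<and> s = \<zero>"
    and Ld: "L = {vadd R (rsmult R x r) (rsmult R y s) | r s. r \<in> carrier R \<and> s \<in> carrier R}"
    using L unfolding free_rank2_submodule_def by blast
  note xc = co_carrier[OF x] and yc = co_carrier[OF y]
  have Bx: "r = \<zero>" if r: "r \<in> carrier R" and h: "rsmult R x r = vzero R" for r
  proof -
    have hl: "co x l \<otimes> r = \<zero>" for l using arg_cong[OF h, of "\<lambda>v. co v l"] by simp
    have "vadd R (rsmult R x r) (rsmult R y \<zero>) = vzero R"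
      by (rule vec3_eqI) (simp_all add: hl yc)
    then show ?thesis using B[OF r zero_closed] by blast
  qed
  obtain i where i: "i < 3" "co x i \<in> Units R" using unit_coord[OF t cls x Bx] by blast
  define u where "u = co x i"
  have u: "u \<in> Units R" "u \<in> carrier R" "inv u \<in> carrier R" "u \<otimes> inv u = \<one>" "inv u \<otimes> u = \<one>"
    using i(2) unfolding u_def by (simp_all add: Units_closed Units_inv_closed)
  define x' where "x' = rsmult R x (inv u)"
  have x': "x' \<in> vec3_carrier R" "co x' i = \<one>"
    using x u unfolding x'_def u_def by simp_all
  note x'c = co_carrier[OF x'(1)]
  define c where "c = \<ominus> co y i"
  have c: "c \<in> carrier R" unfolding c_def using yc by simp
  define y' where "y' = vadd R y (rsmult R x' c)"
  have y': "y' \<in> vec3_carrier R" "co y' i = \<zero>"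
    using y x' c yc unfolding y'_def c_def by (simp_all add: r_neg)
  note y'c = co_carrier[OF y'(1)]
  have By': "s = \<zero>" if s: "s \<in> carrier R" and h: "rsmult R y' s = vzero R" for s
  proof -
    have hl: "co y' l \<otimes> s = \<zero>" for l using arg_cong[OF h, of "\<lambda>v. co v l"] by simp
    have "vadd R (rsmult R x (inv u \<otimes> c \<otimes> s)) (rsmult R y s) = rsmult R y' s"
      by (rule vec3_eqI) (simp_all add: y'_def x'_def xc yc u c s l_distr m_assoc a_comm)
    also have "\<dots> = vzero R" by (rule h)
    finally show ?thesis using B[of "inv u \<otimes> c \<otimes> s" s] s u c by simp
  qed
  obtain j where j: "j < 3" "co y' j \<in> Units R" using unit_coord[OF t cls y'(1) By'] by blast
  have ij: "j \<noteq> i" using j y'(2) zero_not_unit[OF t] by auto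
  define w where "w = co y' j"
  have w: "w \<in> Units R" "w \<in> carrier R" "inv w \<in> carrier R" "w \<otimes> inv w = \<one>" "inv w \<otimes> w = \<one>"
    using j(2) unfolding w_def by (simp_all add: Units_closed Units_inv_closed)
  define y'' where "y'' = rsmult R y' (inv w)"
  have y'': "y'' \<in> vec3_carrier R" "co y'' j = \<one>" "co y'' i = \<zero>"
    using y' w unfolding y''_def w_def by simp_all
  note y''c = co_carrier[OF y''(1)]
  define d where "d = \<ominus> co x' j"
  have d: "d \<in> carrier R" unfolding d_def using x'c by simp
  define x'' where "x'' = vadd R x' (rsmult R y'' d)"
  have x'': "x'' \<in> vec3_carrier R" "co x'' i = \<one>" "co x'' j = \<zero>"
    using x' y'' d x'c unfolding x''_def d_def by (simp_all add: r_neg)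
  note x''c = co_carrier[OF x''(1)]
  define k where "k = 3 - i - j"
  define a where "a = co x'' k"
  define b where "b = co y'' k"
  have ab: "a \<in> carrier R" "b \<in> carrier R" unfolding a_def b_def using x''c y''c by auto
  have N1: "x'' \<in> Nf R i j k a b" unfolding Nf_def using x'' ab by (simp add: a_def)
  have N2: "y'' \<in> Nf R i j k a b" unfolding Nf_def using y'' ab by (simp add: b_def)
  have "x' = vadd R x'' (rsmult R y'' (co x' j))"
    by (rule vec3_eqI) (simp_all add: x''_def d_def id_cancel x'c y''c)
  then have N3: "x' \<in> Nf R i j k a b" using N1 N2 ab x'c by (metis Nf_vadd Nf_rsmult)
  have "x = rsmult R x' u"
    by (rule vec3_eqI) (simp_all add: x'_def id_unit xc u)
  then have N4: "x \<in> Nf R i j k a b" using N3 ab u by (metis Nf_rsmult)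
  have "y' = rsmult R y'' w"
    by (rule vec3_eqI) (simp_all add: y''_def id_unit y'c w)
  then have N5: "y' \<in> Nf R i j k a b" using N2 ab w by (metis Nf_rsmult)
  have "y = vadd R y' (rsmult R x' (co y i))"
    by (rule vec3_eqI) (simp_all add: y'_def c_def id_cancel yc x'c)
  then have N6: "y \<in> Nf R i j k a b" using N3 N5 ab yc by (metis Nf_vadd Nf_rsmult)
  have sub: "L \<subseteq> Nf R i j k a b"
  proof
    fix v assume "v \<in> L"
    then obtain r s where rs: "r \<in> carrier R" "s \<in> carrier R" and v: "v = vadd R (rsmult R x r) (rsmult R y s)"
      using Ld by blast
    show "v \<in> Nf R i j k a b" unfolding v using N4 N6 ab rs by (metis Nf_vadd Nf_rsmult)
  qed
  have "(i = 0 \<and> j = 1) \<or> (i = 0 \<and> j = 2) \<or> (i = 1 \<and> j = 2) \<or> (i = 1 \<and> j = 0) \<or> (i = 2 \<and> j = 0) \<or> (i = 2 \<and> j = 1)"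
    using i(1) j(1) ij by auto
  then show ?thesis
  proof (elim disjE conjE)
    assume "i = 0" "j = 1" then show ?thesis using sub ab by (intro pick_form[where i=i and j=j and k=k]) (simp_all add: k_def)
  next
    assume "i = 0" "j = 2" then show ?thesis using sub ab by (intro pick_form[where i=i and j=j and k=k]) (simp_all add: k_def)
  next
    assume "i = 1" "j = 2" then show ?thesis using sub ab by (intro pick_form[where i=i and j=j and k=k]) (simp_all add: k_def)
  next
    assume "i = 1" "j = 0" then show ?thesis using sub ab Nf_swap[OF ab] by (intro pick_form[where i=j and j=i and k=k and a=b and b=a]) (simp_all add: k_def)
  next
    assume "i = 2" "j = 0" then show ?thesis using sub ab Nf_swap[OF ab] by (intro pick_form[where i=j and j=i and k=k and a=b and b=a]) (simp_all add: k_def)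
  next
    assume "i = 2" "j = 1" then show ?thesis using sub ab Nf_swap[OF ab] by (intro pick_form[where i=j and j=i and k=k and a=b and b=a]) (simp_all add: k_def)
  qed
qed


lemma span1_self: "p \<in> vec3_carrier R \<Longrightarrow> p \<in> span1 R p"
  unfolding span1_def
proof (intro CollectI exI conjI)
  assume p: "p \<in> vec3_carrier R"
  show "p = rsmult R p \<one>" by (rule vec3_eqI) (simp_all add: co_carrier[OF p])
qed simp

lemma arc_from_list:
  assumes t: "t \<in> carrier R" "t \<noteq> \<zero>"
    and cls: "\<And>z. z \<in> carrier R \<Longrightarrow> z \<in> Units R \<or> z \<otimes> t = \<zero>"
    and ps_car: "set ps \<subseteq> vec3_carrier R"
    and ps_one: "\<And>p. p \<in> set ps \<Longrightarrow> co p (idx R p) = \<one>"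
    and ps_inj: "\<And>p q. p \<in> set ps \<Longrightarrow> q \<in> set ps \<Longrightarrow> q = rsmult R p (co q (idx R p)) \<Longrightarrow> q = p"
    and dist: "distinct ps" and len: "length ps = k"
    and lines: "\<And>i j l a b. (i,j,l) \<in> {(0,1,2),(0,2,1),(1,2,0)} \<Longrightarrow> a \<in> carrier R \<Longrightarrow> b \<in> carrier R \<Longrightarrow>
        length (filter (\<lambda>p. co p l = a \<otimes> co p i \<oplus> b \<otimes> co p j) ps) \<le> n"
  shows "\<exists>A. projective_arc R A k n"
proof -
  define A where "A = span1 R ` set ps"
  have pts: "A \<subseteq> PHG_points R"
  proof
    fix P assume "P \<in> A"
    then obtain p where p: "p \<in> set ps" and P: "P = span1 R p" unfolding A_def by blast
    have pc: "p \<in> vec3_carrier R" using p ps_car by blast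
    have "r = \<zero>" if r: "r \<in> carrier R" and h: "rsmult R p r = vzero R" for r
    proof -
      have "co p (idx R p) \<otimes> r = \<zero>" using arg_cong[OF h, of "\<lambda>v. co v (idx R p)"] by simp
      then show ?thesis using ps_one[OF p] r by simp
    qed
    then show "P \<in> PHG_points R" unfolding PHG_points_def free_rank1_submodule_def P span1_def
      using pc by (intro CollectI bexI[of _ p] conjI) auto
  qed
  have inj: "inj_on (span1 R) (set ps)"
  proof (rule inj_onI)
    fix p q assume p: "p \<in> set ps" and q: "q \<in> set ps" and e: "span1 R p = span1 R q"
    have qc: "q \<in> vec3_carrier R" using q ps_car by blast
    have "q \<in> span1 R p" using e span1_self[OF qc] by simp
    then obtain r where r: "r \<in> carrier R" and qr: "q = rsmult R p r" unfolding span1_def by blast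
    have "co q (idx R p) = r" using qr ps_one[OF p] r by simp
    then have "q = rsmult R p (co q (idx R p))" using qr by simp
    then show "p = q" using ps_inj[OF p q] by simp
  qed
  have card: "card A = k" unfolding A_def using card_image[OF inj] distinct_card[OF dist] len by simp
  have fin: "finite A" unfolding A_def by simp
  have lin: "card {P \<in> A. P \<subseteq> L} \<le> n" if L: "L \<in> PHG_lines R" for L
  proof -
    have Lf: "free_rank2_submodule R L" using L unfolding PHG_lines_def by simp
    obtain i j l a b where H: "(i,j,l) \<in> {(0,1,2),(0,2,1),(1,2,0)} \<and> a \<in> carrier R \<and> b \<in> carrier R
      \<and> L \<subseteq> Nf R i j l a b"
    proof -
      have "\<exists>i j k a b. (i,j,k) \<in> {(0,1,2),(0,2,1),(1,2,0)} \<and> a \<in> carrier R \<and> b \<in> carrier R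
        \<and> L \<subseteq> Nf R i j k a b"
        apply (rule line_sub_Nf[of t])
           apply (rule t(1))
          apply (rule t(2))
         apply (rule cls, assumption)
        apply (rule Lf)
        done
      then show ?thesis using that by blast
    qed
    then have f: "(i,j,l) \<in> {(0,1,2),(0,2,1),(1,2,0)}" and ab: "a \<in> carrier R" "b \<in> carrier R"
      and sub: "L \<subseteq> Nf R i j l a b" by blast+
    define Q where "Q = (\<lambda>p. co p l = a \<otimes> co p i \<oplus> b \<otimes> co p j)"
    have "{P \<in> A. P \<subseteq> L} \<subseteq> span1 R ` set (filter Q ps)"
    proof
      fix P assume "P \<in> {P \<in> A. P \<subseteq> L}"
      then obtain p where p: "p \<in> set ps" and P: "P = span1 R p" and PL: "P \<subseteq> L" unfolding A_def by blast
      have pc: "p \<in> vec3_carrier R" using p ps_car by blast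
      have "p \<in> Nf R i j l a b" using span1_self[OF pc] PL sub P by blast
      then have "Q p" unfolding Nf_def Q_def by simp
      then show "P \<in> span1 R ` set (filter Q ps)" using p P by auto
    qed
    then have "card {P \<in> A. P \<subseteq> L} \<le> card (span1 R ` set (filter Q ps))"
      by (intro card_mono) auto
    also have "\<dots> \<le> card (set (filter Q ps))" by (rule card_image_le) simp
    also have "\<dots> \<le> length (filter Q ps)" by (rule card_length)
    also have "\<dots> \<le> n" unfolding Q_def by (rule lines[OF f ab])
    finally show ?thesis .
  qed
  show ?thesis unfolding projective_arc_def using pts fin card lin by blast
qed

end


section \<open>Transfer from a finite model\<close>

definition vmap :: "('b \<Rightarrow> 'a) \<Rightarrow> 'b vec3 \<Rightarrow> 'a vec3" where
  "vmap E p = (E (co p 0), E (co p 1), E (co p 2))"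

lemma co_vmap [simp]: "co (vmap E p) l = E (co p l)"
  by (simp add: vmap_def co_def)

lemma vmap_inj: "inj E \<Longrightarrow> inj (vmap E)"
  by (rule injI) (metis vec3_eqI co_vmap injD)

definition rsF :: "('b \<Rightarrow> 'b \<Rightarrow> 'b) \<Rightarrow> 'b vec3 \<Rightarrow> 'b \<Rightarrow> 'b vec3" where
  "rsF m p r = (m (co p 0) r, m (co p 1) r, m (co p 2) r)"

lemma ring_transfer:
  fixes R :: "('a, 'c) ring_scheme" and E :: "'b \<Rightarrow> 'a"
  assumes car: "carrier R = range E"
    and hm: "\<And>x y. E x \<otimes>\<^bsub>R\<^esub> E y = E (m x y)" and ha: "\<And>x y. E x \<oplus>\<^bsub>R\<^esub> E y = E (ad x y)"
    and one: "\<one>\<^bsub>R\<^esub> = E o1" and zero: "\<zero>\<^bsub>R\<^esub> = E z0"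
    and am: "\<And>x y w. m (m x y) w = m x (m y w)" and aa: "\<And>x y w. ad (ad x y) w = ad x (ad y w)"
    and ca: "\<And>x y. ad x y = ad y x"
    and dl: "\<And>x y w. m (ad x y) w = ad (m x w) (m y w)" and dr: "\<And>x y w. m w (ad x y) = ad (m w x) (m w y)"
    and ax1: "\<And>x. m o1 x = x \<and> m x o1 = x \<and> ad z0 x = x \<and> ad (ng x) x = z0"
  shows "ring R"
proof (rule ringI)
  show "abelian_group R"
  proof (rule abelian_groupI)
    fix x assume "x \<in> carrier R"
    then obtain a where "x = E a" using car by blast
    then show "\<exists>y\<in>carrier R. y \<oplus>\<^bsub>R\<^esub> x = \<zero>\<^bsub>R\<^esub>"
      using ax1[of a] car by (intro bexI[of _ "E (ng a)"]) (simp_all add: ha zero)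
  next
    fix x y assume "x \<in> carrier R" "y \<in> carrier R"
    then show "x \<oplus>\<^bsub>R\<^esub> y = y \<oplus>\<^bsub>R\<^esub> x" using car ha ca by auto
  qed (auto simp: car ha zero aa ax1)
  show "monoid R"
    by (rule monoidI) (auto simp: car hm one am ax1)
qed (auto simp: car hm ha dl dr)

lemma arc_transfer:
  fixes R :: "('a, 'c) ring_scheme" and E :: "'b \<Rightarrow> 'a"
  assumes rg: "ring R" and car: "carrier R = range E" and inj: "inj E"
    and hm: "\<And>x y. E x \<otimes>\<^bsub>R\<^esub> E y = E (m x y)" and ha: "\<And>x y. E x \<oplus>\<^bsub>R\<^esub> E y = E (ad x y)"
    and one: "\<one>\<^bsub>R\<^esub> = E o1" and zero: "\<zero>\<^bsub>R\<^esub> = E z0"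
    and tz: "t0 \<noteq> z0"
    and clsF: "\<And>x. (\<exists>y. m x y = o1 \<and> m y x = o1) \<or> m x t0 = z0"
    and oneF: "\<forall>p\<in>set psF. co p (idxo o1 p) = o1"
    and injF: "\<forall>p\<in>set psF. \<forall>q\<in>set psF. q = rsF m p (co q (idxo o1 p)) \<longrightarrow> q = p"
    and dist: "distinct psF" and len: "length psF = k"
    and linF: "\<And>i j l a b. (i,j,l) \<in> {(0,1,2),(0,2,1),(1,2,0)} \<Longrightarrow>
        length (filter (\<lambda>p. co p l = ad (m a (co p i)) (m b (co p j))) psF) \<le> n"
  shows "\<exists>A. projective_arc R A k n"
proof -
  interpret ring R by (rule rg)
  have Ec: "E x \<in> carrier R" for x using car by blast
  have vc: "vmap E p \<in> vec3_carrier R" for p by (simp add: vec3_carrier_co Ec)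
  have idxE: "idx R (vmap E p) = idxo o1 p" for p
    by (simp add: idx_def idxo_def one inj_eq[OF inj])
  have rsE: "rsmult R (vmap E p) (E r) = vmap E (rsF m p r)" for p r
    by (rule vec3_eqI) (simp_all add: hm rsF_def)
  have P1: "E t0 \<in> carrier R" by (rule Ec)
  have P2: "E t0 \<noteq> \<zero>\<^bsub>R\<^esub>" using tz inj by (simp add: zero inj_eq)
  have P3: "z \<in> Units R \<or> z \<otimes>\<^bsub>R\<^esub> E t0 = \<zero>\<^bsub>R\<^esub>" if zc: "z \<in> carrier R" for z
  proof -
    obtain x where x: "z = E x" using zc car by blast
    show ?thesis
    proof (cases "\<exists>y. m x y = o1 \<and> m y x = o1")
      case True
      then obtain y where y: "m x y = o1" "m y x = o1" by blast
      have "z \<in> Units R" unfolding Units_def x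
        by (rule CollectI, rule conjI, rule Ec, rule bexI[of _ "E y"]) (simp_all add: hm one y Ec)
      then show ?thesis by simp
    next
      case False
      then have "m x t0 = z0" using clsF by blast
      then show ?thesis by (simp add: x hm zero)
    qed
  qed
  have P4: "set (map (vmap E) psF) \<subseteq> vec3_carrier R" using vc by auto
  have P5: "co p (idx R p) = \<one>\<^bsub>R\<^esub>" if pin: "p \<in> set (map (vmap E) psF)" for p
  proof -
    obtain p' where p': "p' \<in> set psF" "p = vmap E p'" using pin by auto
    show ?thesis using oneF p' by (simp add: idxE one)
  qed
  have P6: "q = p" if pq: "p \<in> set (map (vmap E) psF)" "q \<in> set (map (vmap E) psF)"
      and h: "q = rsmult R p (co q (idx R p))" for p q
  proof -
    obtain p' q' where p': "p' \<in> set psF" "p = vmap E p'" and q': "q' \<in> set psF" "q = vmap E q'"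
      using pq by auto
    have h': "vmap E q' = rsmult R (vmap E p') (co (vmap E q') (idx R (vmap E p')))"
      using h unfolding p'(2) q'(2) .
    have "vmap E q' = vmap E (rsF m p' (co q' (idxo o1 p')))" using h' by (simp add: idxE rsE)
    then have "q' = rsF m p' (co q' (idxo o1 p'))" using vmap_inj[OF inj] by (simp add: inj_eq)
    then have "q' = p'" using injF p' q' by blast
    then show "q = p" using p' q' by simp
  qed
  have P7: "distinct (map (vmap E) psF)"
    using dist inj_on_subset[OF vmap_inj[OF inj] subset_UNIV] by (simp add: distinct_map)
  have P8: "length (map (vmap E) psF) = k" using len by simp
  have P9: "length (filter (\<lambda>p. co p l = a \<otimes>\<^bsub>R\<^esub> co p i \<oplus>\<^bsub>R\<^esub> b \<otimes>\<^bsub>R\<^esub> co p j) (map (vmap E) psF)) \<le> n"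
    if f: "((i::nat),(j::nat),(l::nat)) \<in> {(0,1,2),(0,2,1),(1,2,0)}" and a: "a \<in> carrier R" and b: "b \<in> carrier R"
    for i j l a b
  proof -
    obtain a' b' where ab: "a = E a'" "b = E b'" using a b car by blast
    have "filter (\<lambda>p. co p l = a \<otimes>\<^bsub>R\<^esub> co p i \<oplus>\<^bsub>R\<^esub> b \<otimes>\<^bsub>R\<^esub> co p j) (map (vmap E) psF)
        = map (vmap E) (filter (\<lambda>p. co p l = ad (m a' (co p i)) (m b' (co p j))) psF)"
      by (simp add: filter_map comp_def ab hm ha inj_eq[OF inj])
    then show ?thesis using linF[OF f, of a' b'] by simp
  qed
  show ?thesis by (rule arc_from_list[OF P1 P2 P3 P4 P5 P6 P7 P8 P9])
qed


section \<open>Finite models of the three rings\<close>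

datatype f = F0 | F1 | F2 | F3

fun fe :: "f \<Rightarrow> nat" where
  "fe F0 = 0" | "fe F1 = 1" | "fe F2 = 2" | "fe F3 = 3"

definition E :: "f \<times> f \<Rightarrow> nat \<times> nat" where
  "E x = (fe (fst x), fe (snd x))"

lemma fe_inj: "fe a = fe b \<longleftrightarrow> a = b"
  by (cases a; cases b) simp_all

lemma E_inj: "inj E"
  by (rule injI) (auto simp: E_def fe_inj prod_eq_iff)

lemma fe_lt: "fe a < 4"
  by (cases a) simp_all

lemma fe_surj: "n < 4 \<Longrightarrow> \<exists>a. fe a = n"
proof -
  assume "n < 4"
  then have "n = 0 \<or> n = 1 \<or> n = 2 \<or> n = 3" by auto
  then show ?thesis by (metis fe.simps)
qed

lemma carrier_E: "{0..<4} \<times> {0..<4} = range E"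
proof
  show "range E \<subseteq> {0..<4} \<times> {0..<4}" by (auto simp: E_def fe_lt)
next
  show "{0..<4} \<times> {0..<4} \<subseteq> range E"
  proof
    fix x :: "nat \<times> nat" assume "x \<in> {0..<4} \<times> {0..<4}"
    then obtain a b where "fe a = fst x" "fe b = snd x" using fe_surj by (metis SigmaE atLeastLessThan_iff fst_conv snd_conv)
    then have "x = E (a, b)" by (simp add: E_def)
    then show "x \<in> range E" by blast
  qed
qed

definition all16 :: "(f \<times> f) list" where
  "all16 = [(F0, F0), (F0, F1), (F0, F2), (F0, F3), (F1, F0), (F1, F1), (F1, F2), (F1, F3), (F2, F0), (F2, F1), (F2, F2), (F2, F3), (F3, F0), (F3, F1), (F3, F2), (F3, F3)]"

lemma all16: "x \<in> set all16"
proof (cases x)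
  case (Pair a b)
  then show ?thesis by (cases a; cases b) (simp_all add: all16_def)
qed

fun cnt :: "('a \<Rightarrow> bool) \<Rightarrow> 'a list \<Rightarrow> nat" where
  "cnt P [] = 0"
| "cnt P (x # xs) = (if P x then Suc (cnt P xs) else cnt P xs)"

lemma cnt_eq: "cnt P xs = length (filter P xs)"
  by (induction xs) simp_all

lemma lin_from_forms:
  assumes f1: "\<forall>a\<in>set all16. \<forall>b\<in>set all16. length (filter (\<lambda>(x,y,z). z = ad (m a x) (m b y)) ps) \<le> n"
    and f2: "\<forall>a\<in>set all16. \<forall>b\<in>set all16. length (filter (\<lambda>(x,y,z). y = ad (m a x) (m b z)) ps) \<le> n"
    and f3: "\<forall>a\<in>set all16. \<forall>b\<in>set all16. length (filter (\<lambda>(x,y,z). x = ad (m a y) (m b z)) ps) \<le> n"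
    and ij: "(i,j,l) \<in> {(0,1,2),(0,2,1),(1,2,0)}"
  shows "length (filter (\<lambda>p. co p l = ad (m a (co p i)) (m b (co p j))) ps) \<le> n"
proof -
  have e1: "(\<lambda>p. co p 2 = ad (m a (co p 0)) (m b (co p 1))) = (\<lambda>(x,y,z). z = ad (m a x) (m b y))"
    by (rule ext) (auto simp: co_def split: prod.split)
  have e2: "(\<lambda>p. co p 1 = ad (m a (co p 0)) (m b (co p 2))) = (\<lambda>(x,y,z). y = ad (m a x) (m b z))"
    by (rule ext) (auto simp: co_def split: prod.split)
  have e3: "(\<lambda>p. co p 0 = ad (m a (co p 1)) (m b (co p 2))) = (\<lambda>(x,y,z). x = ad (m a y) (m b z))"
    by (rule ext) (auto simp: co_def split: prod.split)
  have "(i = 0 \<and> j = 1 \<and> l = 2) \<or> (i = 0 \<and> j = 2 \<and> l = 1) \<or> (i = 1 \<and> j = 2 \<and> l = 0)"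
    using ij by auto
  then show ?thesis
  proof (elim disjE conjE)
    assume h: "i = 0" "j = 1" "l = 2"
    have "length (filter (\<lambda>(x,y,z). z = ad (m a x) (m b y)) ps) \<le> n" using f1 all16 by blast
    then show ?thesis unfolding h e1 .
  next
    assume h: "i = 0" "j = 2" "l = 1"
    have "length (filter (\<lambda>(x,y,z). y = ad (m a x) (m b z)) ps) \<le> n" using f2 all16 by blast
    then show ?thesis unfolding h e2 .
  next
    assume h: "i = 1" "j = 2" "l = 0"
    have "length (filter (\<lambda>(x,y,z). x = ad (m a y) (m b z)) ps) \<le> n" using f3 all16 by blast
    then show ?thesis unfolding h e3 .
  qed
qed

fun fm :: "f \<Rightarrow> f \<Rightarrow> f" where
 "fm F0 F0 = F0"
| "fm F0 F1 = F0"
| "fm F0 F2 = F0"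
| "fm F0 F3 = F0"
| "fm F1 F0 = F0"
| "fm F1 F1 = F1"
| "fm F1 F2 = F2"
| "fm F1 F3 = F3"
| "fm F2 F0 = F0"
| "fm F2 F1 = F2"
| "fm F2 F2 = F3"
| "fm F2 F3 = F1"
| "fm F3 F0 = F0"
| "fm F3 F1 = F3"
| "fm F3 F2 = F1"
| "fm F3 F3 = F2"

fun fa :: "f \<Rightarrow> f \<Rightarrow> f" where
 "fa F0 F0 = F0"
| "fa F0 F1 = F1"
| "fa F0 F2 = F2"
| "fa F0 F3 = F3"
| "fa F1 F0 = F1"
| "fa F1 F1 = F0"
| "fa F1 F2 = F3"
| "fa F1 F3 = F2"
| "fa F2 F0 = F2"
| "fa F2 F1 = F3"
| "fa F2 F2 = F0"
| "fa F2 F3 = F1"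
| "fa F3 F0 = F3"
| "fa F3 F1 = F2"
| "fa F3 F2 = F1"
| "fa F3 F3 = F0"

fun zm :: "f \<Rightarrow> f \<Rightarrow> f" where
 "zm F0 F0 = F0"
| "zm F0 F1 = F0"
| "zm F0 F2 = F0"
| "zm F0 F3 = F0"
| "zm F1 F0 = F0"
| "zm F1 F1 = F1"
| "zm F1 F2 = F2"
| "zm F1 F3 = F3"
| "zm F2 F0 = F0"
| "zm F2 F1 = F2"
| "zm F2 F2 = F0"
| "zm F2 F3 = F2"
| "zm F3 F0 = F0"
| "zm F3 F1 = F3"
| "zm F3 F2 = F2"
| "zm F3 F3 = F1"

fun za :: "f \<Rightarrow> f \<Rightarrow> f" where
 "za F0 F0 = F0"
| "za F0 F1 = F1"
| "za F0 F2 = F2"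
| "za F0 F3 = F3"
| "za F1 F0 = F1"
| "za F1 F1 = F2"
| "za F1 F2 = F3"
| "za F1 F3 = F0"
| "za F2 F0 = F2"
| "za F2 F1 = F3"
| "za F2 F2 = F0"
| "za F2 F3 = F1"
| "za F3 F0 = F3"
| "za F3 F1 = F0"
| "za F3 F2 = F1"
| "za F3 F3 = F2"

fun zn :: "f \<Rightarrow> f" where
 "zn F0 = F0"
| "zn F1 = F3"
| "zn F2 = F2"
| "zn F3 = F1"


lemma fm_fe: "f4mul (fe a) (fe b) = fe (fm a b)"
  by (cases a; cases b) (simp_all add: f4mul_def)

lemma fa_fe: "f4add (fe a) (fe b) = fe (fa a b)"
  by (cases a; cases b) (simp_all add: f4add_def)

definition mS :: "f \<times> f \<Rightarrow> f \<times> f \<Rightarrow> f \<times> f" where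
  "mS x y = (fm (fst x) (fst y), fa (fm (fst x) (snd y)) (fm (snd x) (fst y)))"
definition mT :: "f \<times> f \<Rightarrow> f \<times> f \<Rightarrow> f \<times> f" where
  "mT x y = (fm (fst x) (fst y), fa (fm (fst x) (snd y)) (fm (snd x) (fm (fst y) (fst y))))"
definition aF :: "f \<times> f \<Rightarrow> f \<times> f \<Rightarrow> f \<times> f" where
  "aF x y = (fa (fst x) (fst y), fa (snd x) (snd y))"
definition mG :: "f \<times> f \<Rightarrow> f \<times> f \<Rightarrow> f \<times> f" where
  "mG x y = (za (zm (fst x) (fst y)) (zm F3 (zm (snd x) (snd y))),
             za (za (zm (fst x) (snd y)) (zm (snd x) (fst y))) (zm F3 (zm (snd x) (snd y))))"
definition aG :: "f \<times> f \<Rightarrow> f \<times> f \<Rightarrow> f \<times> f" where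
  "aG x y = (za (fst x) (fst y), za (snd x) (snd y))"
definition nG :: "f \<times> f \<Rightarrow> f \<times> f" where
  "nG x = (zn (fst x), zn (snd x))"

lemma S4_hm: "E x \<otimes>\<^bsub>S4\<^esub> E y = E (mS x y)"
  by (simp add: S4_def E_def mS_def fm_fe fa_fe split_def)
lemma S4_ha: "E x \<oplus>\<^bsub>S4\<^esub> E y = E (aF x y)"
  by (simp add: S4_def E_def aF_def fa_fe split_def)
lemma T4_hm: "E x \<otimes>\<^bsub>T4\<^esub> E y = E (mT x y)"
  by (simp add: T4_def E_def mT_def fm_fe fa_fe split_def)
lemma T4_ha: "E x \<oplus>\<^bsub>T4\<^esub> E y = E (aF x y)"
  by (simp add: T4_def E_def aF_def fa_fe split_def)

lemma G4_hm0: "E (a, b) \<otimes>\<^bsub>G4\<^esub> E (c, d) = E (mG (a, b) (c, d))"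
  by (cases a; cases b; cases c; cases d) (simp_all add: G4_def E_def mG_def)
lemma G4_hm: "E x \<otimes>\<^bsub>G4\<^esub> E y = E (mG x y)"
  using G4_hm0[of "fst x" "snd x" "fst y" "snd y"] by simp
lemma G4_ha0: "E (a, b) \<oplus>\<^bsub>G4\<^esub> E (c, d) = E (aG (a, b) (c, d))"
  by (cases a; cases b; cases c; cases d) (simp_all add: G4_def E_def aG_def)
lemma G4_ha: "E x \<oplus>\<^bsub>G4\<^esub> E y = E (aG x y)"
  using G4_ha0[of "fst x" "snd x" "fst y" "snd y"] by simp


lemma S4_car: "carrier S4 = range E" by (simp add: S4_def carrier_E)
lemma S4_one: "\<one>\<^bsub>S4\<^esub> = E (F1, F0)" by (simp add: S4_def E_def)
lemma S4_zero: "\<zero>\<^bsub>S4\<^esub> = E (F0, F0)" by (simp add: S4_def E_def)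

lemma S4_ax_chk:
  "\<forall>x\<in>set all16. \<forall>y\<in>set all16. \<forall>w\<in>set all16. mS (mS x y) w = mS x (mS y w) \<and> aF (aF x y) w = aF x (aF y w)
     \<and> mS (aF x y) w = aF (mS x w) (mS y w) \<and> mS w (aF x y) = aF (mS w x) (mS w y)"
  by code_simp

lemma S4_ax1_chk:
  "\<forall>x\<in>set all16. \<forall>y\<in>set all16. aF x y = aF y x \<and> mS (F1, F0) x = x \<and> mS x (F1, F0) = x \<and> aF (F0, F0) x = x \<and> aF (id x) x = (F0, F0)"
  by code_simp

lemma S4_ring: "ring S4"
  apply (rule ring_transfer[OF S4_car S4_hm S4_ha S4_one S4_zero, where ng = "id"])
  using S4_ax_chk S4_ax1_chk all16 by blast+

lemma S4_cls_chk: "\<forall>x\<in>set all16. (\<exists>y\<in>set all16. mS x y = (F1, F0) \<and> mS y x = (F1, F0)) \<or> mS x (F0, F1) = (F0, F0)"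
  by code_simp

lemma S4_cls: "(\<exists>y. mS x y = (F1, F0) \<and> mS y x = (F1, F0)) \<or> mS x (F0, F1) = (F0, F0)"
  using S4_cls_chk all16[of x] by blast

definition S4_c0 :: "(f \<times> f) vec3 list" where
  "S4_c0 = [((F0, F0), (F0, F0), (F1, F0)), ((F0, F0), (F0, F1), (F1, F0)), ((F0, F0), (F0, F2), (F1, F0)), ((F0, F0), (F1, F0), (F0, F0)), ((F0, F0), (F1, F0), (F0, F1)), ((F0, F0), (F1, F0), (F0, F3)), ((F0, F0), (F1, F0), (F1, F1)), ((F0, F0), (F1, F0), (F1, F3)), ((F0, F0), (F1, F0), (F2, F0)), ((F0, F0), (F1, F0), (F2, F1)), ((F0, F0), (F1, F0), (F3, F0)), ((F0, F0), (F1, F0), (F3, F1)), ((F0, F0), (F1, F0), (F3, F3)), ((F0, F1), (F0, F0), (F1, F0)), ((F0, F1), (F0, F1), (F1, F0)), ((F0, F1), (F0, F3), (F1, F0)), ((F0, F1), (F1, F0), (F0, F1)), ((F0, F1), (F1, F0), (F0, F2)), ((F0, F1), (F1, F0), (F0, F3)), ((F0, F1), (F1, F0), (F1, F0))]"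
definition S4_c1 :: "(f \<times> f) vec3 list" where
  "S4_c1 = [((F0, F1), (F1, F0), (F1, F2)), ((F0, F1), (F1, F0), (F2, F2)), ((F0, F1), (F1, F0), (F2, F3)), ((F0, F1), (F1, F0), (F3, F0)), ((F0, F1), (F1, F0), (F3, F1)), ((F0, F1), (F1, F0), (F3, F3)), ((F0, F2), (F0, F0), (F1, F0)), ((F0, F2), (F0, F2), (F1, F0)), ((F0, F2), (F0, F3), (F1, F0)), ((F0, F2), (F1, F0), (F0, F0)), ((F0, F2), (F1, F0), (F0, F2)), ((F0, F2), (F1, F0), (F0, F3)), ((F0, F2), (F1, F0), (F1, F0)), ((F0, F2), (F1, F0), (F1, F1)), ((F0, F2), (F1, F0), (F2, F2)), ((F0, F2), (F1, F0), (F2, F3)), ((F0, F2), (F1, F0), (F3, F0)), ((F0, F2), (F1, F0), (F3, F1)), ((F0, F2), (F1, F0), (F3, F3)), ((F0, F3), (F0, F1), (F1, F0))]"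
definition S4_c2 :: "(f \<times> f) vec3 list" where
  "S4_c2 = [((F0, F3), (F0, F2), (F1, F0)), ((F0, F3), (F0, F3), (F1, F0)), ((F0, F3), (F1, F0), (F0, F0)), ((F0, F3), (F1, F0), (F0, F1)), ((F0, F3), (F1, F0), (F0, F2)), ((F0, F3), (F1, F0), (F1, F2)), ((F0, F3), (F1, F0), (F1, F3)), ((F0, F3), (F1, F0), (F2, F0)), ((F0, F3), (F1, F0), (F2, F1)), ((F0, F3), (F1, F0), (F3, F0)), ((F0, F3), (F1, F0), (F3, F1)), ((F0, F3), (F1, F0), (F3, F3)), ((F1, F0), (F0, F0), (F0, F0)), ((F1, F0), (F0, F0), (F0, F1)), ((F1, F0), (F0, F0), (F1, F0)), ((F1, F0), (F0, F0), (F1, F1)), ((F1, F0), (F0, F0), (F1, F2)), ((F1, F0), (F0, F0), (F2, F2)), ((F1, F0), (F0, F0), (F2, F3)), ((F1, F0), (F0, F0), (F3, F0))]"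
definition S4_c3 :: "(f \<times> f) vec3 list" where
  "S4_c3 = [((F1, F0), (F0, F0), (F3, F1)), ((F1, F0), (F0, F0), (F3, F3)), ((F1, F0), (F0, F1), (F0, F2)), ((F1, F0), (F0, F1), (F0, F3)), ((F1, F0), (F0, F1), (F1, F0)), ((F1, F0), (F0, F1), (F1, F1)), ((F1, F0), (F0, F1), (F1, F3)), ((F1, F0), (F0, F1), (F2, F2)), ((F1, F0), (F0, F1), (F2, F3)), ((F1, F0), (F0, F1), (F3, F0)), ((F1, F0), (F0, F1), (F3, F1)), ((F1, F0), (F0, F1), (F3, F2)), ((F1, F0), (F0, F2), (F0, F2)), ((F1, F0), (F0, F2), (F0, F3)), ((F1, F0), (F0, F2), (F1, F0)), ((F1, F0), (F0, F2), (F1, F2)), ((F1, F0), (F0, F2), (F1, F3)), ((F1, F0), (F0, F2), (F2, F0)), ((F1, F0), (F0, F2), (F2, F2)), ((F1, F0), (F0, F2), (F3, F1))]"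
definition S4_c4 :: "(f \<times> f) vec3 list" where
  "S4_c4 = [((F1, F0), (F0, F2), (F3, F2)), ((F1, F0), (F0, F2), (F3, F3)), ((F1, F0), (F0, F3), (F0, F0)), ((F1, F0), (F0, F3), (F0, F1)), ((F1, F0), (F0, F3), (F1, F1)), ((F1, F0), (F0, F3), (F1, F2)), ((F1, F0), (F0, F3), (F1, F3)), ((F1, F0), (F0, F3), (F2, F0)), ((F1, F0), (F0, F3), (F2, F2)), ((F1, F0), (F0, F3), (F3, F0)), ((F1, F0), (F0, F3), (F3, F2)), ((F1, F0), (F0, F3), (F3, F3)), ((F1, F0), (F1, F0), (F0, F0)), ((F1, F0), (F1, F0), (F0, F3)), ((F1, F0), (F1, F0), (F3, F1)), ((F1, F0), (F1, F0), (F3, F2)), ((F1, F0), (F1, F0), (F3, F3)), ((F1, F0), (F1, F1), (F0, F1)), ((F1, F0), (F1, F1), (F0, F2)), ((F1, F0), (F1, F1), (F1, F0))]"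
definition S4_c5 :: "(f \<times> f) vec3 list" where
  "S4_c5 = [((F1, F0), (F1, F1), (F1, F1)), ((F1, F0), (F1, F1), (F1, F2)), ((F1, F0), (F1, F1), (F1, F3)), ((F1, F0), (F1, F1), (F2, F0)), ((F1, F0), (F1, F1), (F2, F2)), ((F1, F0), (F1, F1), (F3, F2)), ((F1, F0), (F1, F2), (F0, F0)), ((F1, F0), (F1, F2), (F0, F1)), ((F1, F0), (F1, F2), (F0, F2)), ((F1, F0), (F1, F2), (F0, F3)), ((F1, F0), (F1, F2), (F1, F0)), ((F1, F0), (F1, F2), (F1, F1)), ((F1, F0), (F1, F2), (F1, F2)), ((F1, F0), (F1, F2), (F1, F3)), ((F1, F0), (F1, F2), (F3, F0)), ((F1, F0), (F1, F3), (F1, F0)), ((F1, F0), (F1, F3), (F1, F1)), ((F1, F0), (F1, F3), (F1, F2)), ((F1, F0), (F1, F3), (F1, F3)), ((F1, F0), (F1, F3), (F2, F0))]"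
definition S4_c6 :: "(f \<times> f) vec3 list" where
  "S4_c6 = [((F1, F0), (F1, F3), (F2, F2)), ((F1, F0), (F1, F3), (F3, F0)), ((F1, F0), (F1, F3), (F3, F1)), ((F1, F0), (F1, F3), (F3, F3)), ((F1, F0), (F2, F0), (F0, F0)), ((F1, F0), (F2, F0), (F0, F1)), ((F1, F0), (F2, F0), (F0, F3)), ((F1, F0), (F2, F0), (F1, F0)), ((F1, F0), (F2, F0), (F1, F2)), ((F1, F0), (F2, F0), (F2, F0)), ((F1, F0), (F2, F0), (F2, F1)), ((F1, F0), (F2, F0), (F2, F3)), ((F1, F0), (F2, F0), (F3, F0)), ((F1, F0), (F2, F0), (F3, F2)), ((F1, F0), (F2, F1), (F0, F0)), ((F1, F0), (F2, F1), (F0, F1)), ((F1, F0), (F2, F1), (F0, F2)), ((F1, F0), (F2, F1), (F1, F0)), ((F1, F0), (F2, F1), (F1, F3)), ((F1, F0), (F2, F1), (F2, F0))]"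
definition S4_c7 :: "(f \<times> f) vec3 list" where
  "S4_c7 = [((F1, F0), (F2, F1), (F2, F1)), ((F1, F0), (F2, F1), (F2, F3)), ((F1, F0), (F2, F1), (F3, F0)), ((F1, F0), (F2, F1), (F3, F2)), ((F1, F0), (F2, F2), (F0, F1)), ((F1, F0), (F2, F2), (F0, F2)), ((F1, F0), (F2, F2), (F0, F3)), ((F1, F0), (F2, F2), (F1, F1)), ((F1, F0), (F2, F2), (F1, F2)), ((F1, F0), (F2, F2), (F2, F0)), ((F1, F0), (F2, F2), (F2, F1)), ((F1, F0), (F2, F2), (F2, F3)), ((F1, F0), (F2, F2), (F3, F1)), ((F1, F0), (F2, F2), (F3, F3)), ((F1, F0), (F2, F3), (F0, F0)), ((F1, F0), (F2, F3), (F0, F2)), ((F1, F0), (F2, F3), (F0, F3)), ((F1, F0), (F2, F3), (F1, F1)), ((F1, F0), (F2, F3), (F1, F3)), ((F1, F0), (F2, F3), (F2, F0))]"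
definition S4_c8 :: "(f \<times> f) vec3 list" where
  "S4_c8 = [((F1, F0), (F2, F3), (F2, F1)), ((F1, F0), (F2, F3), (F2, F3)), ((F1, F0), (F2, F3), (F3, F1)), ((F1, F0), (F2, F3), (F3, F3)), ((F1, F0), (F3, F0), (F0, F0)), ((F1, F0), (F3, F0), (F0, F1)), ((F1, F0), (F3, F0), (F0, F2)), ((F1, F0), (F3, F0), (F1, F1)), ((F1, F0), (F3, F0), (F1, F2)), ((F1, F0), (F3, F0), (F2, F2)), ((F1, F0), (F3, F0), (F2, F3)), ((F1, F0), (F3, F1), (F0, F0)), ((F1, F0), (F3, F1), (F0, F1)), ((F1, F0), (F3, F1), (F0, F3)), ((F1, F0), (F3, F1), (F1, F0)), ((F1, F0), (F3, F1), (F1, F3)), ((F1, F0), (F3, F1), (F2, F1)), ((F1, F0), (F3, F1), (F2, F2)), ((F1, F0), (F3, F1), (F3, F0)), ((F1, F0), (F3, F1), (F3, F1))]"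
definition S4_c9 :: "(f \<times> f) vec3 list" where
  "S4_c9 = [((F1, F0), (F3, F1), (F3, F2)), ((F1, F0), (F3, F2), (F0, F0)), ((F1, F0), (F3, F2), (F0, F2)), ((F1, F0), (F3, F2), (F0, F3)), ((F1, F0), (F3, F2), (F1, F1)), ((F1, F0), (F3, F2), (F1, F2)), ((F1, F0), (F3, F2), (F2, F2)), ((F1, F0), (F3, F2), (F2, F3)), ((F1, F0), (F3, F2), (F3, F1)), ((F1, F0), (F3, F2), (F3, F2)), ((F1, F0), (F3, F2), (F3, F3)), ((F1, F0), (F3, F3), (F0, F1)), ((F1, F0), (F3, F3), (F0, F2)), ((F1, F0), (F3, F3), (F0, F3)), ((F1, F0), (F3, F3), (F1, F0)), ((F1, F0), (F3, F3), (F1, F3)), ((F1, F0), (F3, F3), (F2, F0)), ((F1, F0), (F3, F3), (F2, F3)), ((F1, F0), (F3, F3), (F3, F1)), ((F1, F0), (F3, F3), (F3, F2))]"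
definition S4_c10 :: "(f \<times> f) vec3 list" where
  "S4_c10 = [((F1, F0), (F3, F3), (F3, F3))]"
definition S4_ps :: "(f \<times> f) vec3 list" where
  "S4_ps = S4_c0 @ S4_c1 @ S4_c2 @ S4_c3 @ S4_c4 @ S4_c5 @ S4_c6 @ S4_c7 @ S4_c8 @ S4_c9 @ S4_c10"
definition S4_tc :: "((f \<times> f) vec3 \<Rightarrow> bool) \<Rightarrow> nat" where
  "S4_tc P = cnt P S4_c0 + cnt P S4_c1 + cnt P S4_c2 + cnt P S4_c3 + cnt P S4_c4 + cnt P S4_c5 + cnt P S4_c6 + cnt P S4_c7 + cnt P S4_c8 + cnt P S4_c9 + cnt P S4_c10"

lemma S4_tc_eq: "length (filter P S4_ps) = S4_tc P"
  by (simp add: S4_ps_def S4_tc_def cnt_eq)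

lemma S4_one_chk: "\<forall>p\<in>set S4_ps. co p (idxo (F1, F0) p) = (F1, F0)"
  by code_simp

lemma S4_inj_chk: "\<forall>p\<in>set S4_ps. \<forall>q\<in>set S4_ps. q = rsF mS p (co q (idxo (F1, F0) p)) \<longrightarrow> q = p"
  by code_simp

lemma S4_dist: "distinct S4_ps"
  by code_simp

lemma S4_len: "length S4_ps = 201"
  by code_simp

lemma S4_l1: "\<forall>a\<in>set all16. \<forall>b\<in>set all16. S4_tc (\<lambda>(x,y,z). z = aF (mS a x) (mS b y)) \<le> 13"
  by code_simp
lemma S4_l2: "\<forall>a\<in>set all16. \<forall>b\<in>set all16. S4_tc (\<lambda>(x,y,z). y = aF (mS a x) (mS b z)) \<le> 13"
  by code_simp
lemma S4_l3: "\<forall>a\<in>set all16. \<forall>b\<in>set all16. S4_tc (\<lambda>(x,y,z). x = aF (mS a y) (mS b z)) \<le> 13"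
  by code_simp

lemma S4_arc: "\<exists>A. projective_arc S4 A 201 13"
proof (rule arc_transfer[OF S4_ring S4_car E_inj S4_hm S4_ha S4_one S4_zero])
  show "(F0, F1) \<noteq> (F0, F0)" by simp
  show "\<And>x. (\<exists>y. mS x y = (F1, F0) \<and> mS y x = (F1, F0)) \<or> mS x (F0, F1) = (F0, F0)" by (rule S4_cls)
  show "\<forall>p\<in>set S4_ps. co p (idxo (F1, F0) p) = (F1, F0)" by (rule S4_one_chk)
  show "\<forall>p\<in>set S4_ps. \<forall>q\<in>set S4_ps. q = rsF mS p (co q (idxo (F1, F0) p)) \<longrightarrow> q = p" by (rule S4_inj_chk)
  show "distinct S4_ps" by (rule S4_dist)
  show "length S4_ps = 201" by (rule S4_len)
  show "length (filter (\<lambda>p. co p l = aF (mS a (co p i)) (mS b (co p j))) S4_ps) \<le> 13"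
    if "(i, j, l) \<in> {(0, 1, 2), (0, 2, 1), (1, 2, 0)}" for i j l a b
    by (rule lin_from_forms[OF _ _ _ that]) (use S4_l1 S4_l2 S4_l3 in \<open>simp_all add: S4_tc_eq\<close>)
qed


lemma T4_car: "carrier T4 = range E" by (simp add: T4_def carrier_E)
lemma T4_one: "\<one>\<^bsub>T4\<^esub> = E (F1, F0)" by (simp add: T4_def E_def)
lemma T4_zero: "\<zero>\<^bsub>T4\<^esub> = E (F0, F0)" by (simp add: T4_def E_def)

lemma T4_ax_chk:
  "\<forall>x\<in>set all16. \<forall>y\<in>set all16. \<forall>w\<in>set all16. mT (mT x y) w = mT x (mT y w) \<and> aF (aF x y) w = aF x (aF y w)
     \<and> mT (aF x y) w = aF (mT x w) (mT y w) \<and> mT w (aF x y) = aF (mT w x) (mT w y)"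
  by code_simp

lemma T4_ax1_chk:
  "\<forall>x\<in>set all16. \<forall>y\<in>set all16. aF x y = aF y x \<and> mT (F1, F0) x = x \<and> mT x (F1, F0) = x \<and> aF (F0, F0) x = x \<and> aF (id x) x = (F0, F0)"
  by code_simp

lemma T4_ring: "ring T4"
  apply (rule ring_transfer[OF T4_car T4_hm T4_ha T4_one T4_zero, where ng = "id"])
  using T4_ax_chk T4_ax1_chk all16 by blast+

lemma T4_cls_chk: "\<forall>x\<in>set all16. (\<exists>y\<in>set all16. mT x y = (F1, F0) \<and> mT y x = (F1, F0)) \<or> mT x (F0, F1) = (F0, F0)"
  by code_simp

lemma T4_cls: "(\<exists>y. mT x y = (F1, F0) \<and> mT y x = (F1, F0)) \<or> mT x (F0, F1) = (F0, F0)"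
  using T4_cls_chk all16[of x] by blast

definition T4_c0 :: "(f \<times> f) vec3 list" where
  "T4_c0 = [((F0, F0), (F0, F1), (F1, F0)), ((F0, F0), (F0, F2), (F1, F0)), ((F0, F0), (F1, F0), (F0, F0)), ((F0, F0), (F1, F0), (F0, F1)), ((F0, F0), (F1, F0), (F0, F3)), ((F0, F0), (F1, F0), (F1, F0)), ((F0, F0), (F1, F0), (F1, F2)), ((F0, F0), (F1, F0), (F1, F3)), ((F0, F0), (F1, F0), (F2, F0)), ((F0, F0), (F1, F0), (F2, F1)), ((F0, F0), (F1, F0), (F2, F2)), ((F0, F0), (F1, F0), (F3, F0)), ((F0, F0), (F1, F0), (F3, F1)), ((F0, F1), (F0, F0), (F1, F0)), ((F0, F1), (F0, F3), (F1, F0)), ((F0, F1), (F1, F0), (F0, F1)), ((F0, F1), (F1, F0), (F0, F3)), ((F0, F1), (F1, F0), (F1, F2)), ((F0, F1), (F1, F0), (F1, F3)), ((F0, F1), (F1, F0), (F2, F3))]"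
definition T4_c1 :: "(f \<times> f) vec3 list" where
  "T4_c1 = [((F0, F1), (F1, F0), (F3, F0)), ((F0, F1), (F1, F0), (F3, F2)), ((F0, F2), (F0, F0), (F1, F0)), ((F0, F2), (F0, F1), (F1, F0)), ((F0, F2), (F0, F2), (F1, F0)), ((F0, F2), (F1, F0), (F0, F0)), ((F0, F2), (F1, F0), (F0, F2)), ((F0, F2), (F1, F0), (F1, F0)), ((F0, F2), (F1, F0), (F1, F2)), ((F0, F2), (F1, F0), (F1, F3)), ((F0, F2), (F1, F0), (F2, F0)), ((F0, F2), (F1, F0), (F2, F2)), ((F0, F2), (F1, F0), (F2, F3)), ((F0, F2), (F1, F0), (F3, F0)), ((F0, F2), (F1, F0), (F3, F1)), ((F0, F2), (F1, F0), (F3, F2)), ((F0, F3), (F0, F0), (F1, F0)), ((F0, F3), (F0, F2), (F1, F0)), ((F0, F3), (F0, F3), (F1, F0)), ((F0, F3), (F1, F0), (F0, F0))]"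
definition T4_c2 :: "(f \<times> f) vec3 list" where
  "T4_c2 = [((F0, F3), (F1, F0), (F0, F1)), ((F0, F3), (F1, F0), (F0, F2)), ((F0, F3), (F1, F0), (F1, F0)), ((F0, F3), (F1, F0), (F1, F3)), ((F0, F3), (F1, F0), (F2, F1)), ((F0, F3), (F1, F0), (F2, F2)), ((F0, F3), (F1, F0), (F2, F3)), ((F0, F3), (F1, F0), (F3, F1)), ((F0, F3), (F1, F0), (F3, F2)), ((F0, F3), (F1, F0), (F3, F3)), ((F1, F0), (F0, F0), (F0, F1)), ((F1, F0), (F0, F0), (F0, F2)), ((F1, F0), (F0, F0), (F0, F3)), ((F1, F0), (F0, F0), (F1, F0)), ((F1, F0), (F0, F0), (F1, F2)), ((F1, F0), (F0, F0), (F2, F0)), ((F1, F0), (F0, F0), (F2, F1)), ((F1, F0), (F0, F0), (F2, F3)), ((F1, F0), (F0, F0), (F3, F1)), ((F1, F0), (F0, F0), (F3, F3))]"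
definition T4_c3 :: "(f \<times> f) vec3 list" where
  "T4_c3 = [((F1, F0), (F0, F1), (F0, F1)), ((F1, F0), (F0, F1), (F0, F2)), ((F1, F0), (F0, F1), (F0, F3)), ((F1, F0), (F0, F1), (F1, F0)), ((F1, F0), (F0, F1), (F1, F1)), ((F1, F0), (F0, F1), (F1, F2)), ((F1, F0), (F0, F1), (F2, F1)), ((F1, F0), (F0, F1), (F3, F0)), ((F1, F0), (F0, F1), (F3, F1)), ((F1, F0), (F0, F1), (F3, F2)), ((F1, F0), (F0, F2), (F0, F0)), ((F1, F0), (F0, F2), (F0, F1)), ((F1, F0), (F0, F2), (F1, F0)), ((F1, F0), (F0, F2), (F1, F1)), ((F1, F0), (F0, F2), (F1, F3)), ((F1, F0), (F0, F2), (F2, F1)), ((F1, F0), (F0, F2), (F2, F2)), ((F1, F0), (F0, F2), (F2, F3)), ((F1, F0), (F0, F2), (F3, F2)), ((F1, F0), (F0, F2), (F3, F3))]"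
definition T4_c4 :: "(f \<times> f) vec3 list" where
  "T4_c4 = [((F1, F0), (F0, F3), (F0, F0)), ((F1, F0), (F0, F3), (F0, F1)), ((F1, F0), (F0, F3), (F1, F1)), ((F1, F0), (F0, F3), (F1, F2)), ((F1, F0), (F0, F3), (F2, F1)), ((F1, F0), (F0, F3), (F2, F2)), ((F1, F0), (F0, F3), (F2, F3)), ((F1, F0), (F0, F3), (F3, F0)), ((F1, F0), (F0, F3), (F3, F1)), ((F1, F0), (F0, F3), (F3, F3)), ((F1, F0), (F1, F0), (F0, F0)), ((F1, F0), (F1, F0), (F0, F1)), ((F1, F0), (F1, F0), (F0, F3)), ((F1, F0), (F1, F0), (F1, F2)), ((F1, F0), (F1, F0), (F1, F3)), ((F1, F0), (F1, F0), (F2, F0)), ((F1, F0), (F1, F0), (F2, F1)), ((F1, F0), (F1, F0), (F2, F3)), ((F1, F0), (F1, F0), (F3, F0)), ((F1, F0), (F1, F0), (F3, F1))]"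
definition T4_c5 :: "(f \<times> f) vec3 list" where
  "T4_c5 = [((F1, F0), (F1, F0), (F3, F3)), ((F1, F0), (F1, F1), (F0, F2)), ((F1, F0), (F1, F1), (F0, F3)), ((F1, F0), (F1, F1), (F1, F1)), ((F1, F0), (F1, F1), (F1, F3)), ((F1, F0), (F1, F1), (F2, F1)), ((F1, F0), (F1, F1), (F3, F1)), ((F1, F0), (F1, F1), (F3, F2)), ((F1, F0), (F1, F2), (F0, F0)), ((F1, F0), (F1, F2), (F0, F1)), ((F1, F0), (F1, F2), (F0, F2)), ((F1, F0), (F1, F2), (F1, F0)), ((F1, F0), (F1, F2), (F1, F1)), ((F1, F0), (F1, F2), (F1, F2)), ((F1, F0), (F1, F2), (F2, F0)), ((F1, F0), (F1, F2), (F2, F1)), ((F1, F0), (F1, F2), (F2, F3)), ((F1, F0), (F1, F2), (F3, F0)), ((F1, F0), (F1, F2), (F3, F3)), ((F1, F0), (F1, F3), (F0, F2))]"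
definition T4_c6 :: "(f \<times> f) vec3 list" where
  "T4_c6 = [((F1, F0), (F1, F3), (F0, F3)), ((F1, F0), (F1, F3), (F1, F0)), ((F1, F0), (F1, F3), (F1, F1)), ((F1, F0), (F1, F3), (F1, F3)), ((F1, F0), (F1, F3), (F2, F0)), ((F1, F0), (F1, F3), (F2, F1)), ((F1, F0), (F1, F3), (F2, F3)), ((F1, F0), (F1, F3), (F3, F0)), ((F1, F0), (F1, F3), (F3, F1)), ((F1, F0), (F1, F3), (F3, F2)), ((F1, F0), (F2, F0), (F0, F0)), ((F1, F0), (F2, F0), (F0, F2)), ((F1, F0), (F2, F0), (F1, F0)), ((F1, F0), (F2, F0), (F1, F1)), ((F1, F0), (F2, F0), (F1, F2)), ((F1, F0), (F2, F0), (F1, F3)), ((F1, F0), (F2, F0), (F2, F0)), ((F1, F0), (F2, F0), (F2, F2)), ((F1, F0), (F2, F0), (F3, F0)), ((F1, F0), (F2, F0), (F3, F1))]"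
definition T4_c7 :: "(f \<times> f) vec3 list" where
  "T4_c7 = [((F1, F0), (F2, F0), (F3, F2)), ((F1, F0), (F2, F0), (F3, F3)), ((F1, F0), (F2, F1), (F0, F0)), ((F1, F0), (F2, F1), (F0, F1)), ((F1, F0), (F2, F1), (F0, F2)), ((F1, F0), (F2, F1), (F1, F0)), ((F1, F0), (F2, F1), (F1, F2)), ((F1, F0), (F2, F1), (F1, F3)), ((F1, F0), (F2, F1), (F2, F0)), ((F1, F0), (F2, F1), (F2, F3)), ((F1, F0), (F2, F1), (F3, F0)), ((F1, F0), (F2, F1), (F3, F2)), ((F1, F0), (F2, F1), (F3, F3)), ((F1, F0), (F2, F2), (F0, F2)), ((F1, F0), (F2, F2), (F1, F1)), ((F1, F0), (F2, F2), (F1, F2)), ((F1, F0), (F2, F2), (F1, F3)), ((F1, F0), (F2, F2), (F2, F2)), ((F1, F0), (F2, F2), (F3, F0)), ((F1, F0), (F2, F2), (F3, F2))]"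
definition T4_c8 :: "(f \<times> f) vec3 list" where
  "T4_c8 = [((F1, F0), (F2, F2), (F3, F3)), ((F1, F0), (F3, F0), (F0, F0)), ((F1, F0), (F3, F0), (F0, F1)), ((F1, F0), (F3, F0), (F0, F2)), ((F1, F0), (F3, F0), (F1, F0)), ((F1, F0), (F3, F0), (F1, F1)), ((F1, F0), (F3, F0), (F1, F3)), ((F1, F0), (F3, F0), (F2, F0)), ((F1, F0), (F3, F0), (F3, F0)), ((F1, F0), (F3, F0), (F3, F1)), ((F1, F0), (F3, F0), (F3, F3)), ((F1, F0), (F3, F1), (F0, F0)), ((F1, F0), (F3, F1), (F0, F1)), ((F1, F0), (F3, F1), (F1, F2)), ((F1, F0), (F3, F1), (F1, F3)), ((F1, F0), (F3, F1), (F2, F0)), ((F1, F0), (F3, F1), (F2, F1)), ((F1, F0), (F3, F1), (F2, F2)), ((F1, F0), (F3, F1), (F3, F0)), ((F1, F0), (F3, F1), (F3, F1))]"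
definition T4_c9 :: "(f \<times> f) vec3 list" where
  "T4_c9 = [((F1, F0), (F3, F1), (F3, F2)), ((F1, F0), (F3, F2), (F0, F0)), ((F1, F0), (F3, F2), (F0, F1)), ((F1, F0), (F3, F2), (F1, F0)), ((F1, F0), (F3, F2), (F1, F1)), ((F1, F0), (F3, F2), (F1, F3)), ((F1, F0), (F3, F2), (F2, F0)), ((F1, F0), (F3, F2), (F2, F1)), ((F1, F0), (F3, F2), (F2, F2)), ((F1, F0), (F3, F2), (F3, F1)), ((F1, F0), (F3, F2), (F3, F2)), ((F1, F0), (F3, F3), (F0, F0)), ((F1, F0), (F3, F3), (F0, F2)), ((F1, F0), (F3, F3), (F0, F3)), ((F1, F0), (F3, F3), (F1, F0)), ((F1, F0), (F3, F3), (F1, F2)), ((F1, F0), (F3, F3), (F2, F0)), ((F1, F0), (F3, F3), (F2, F1)), ((F1, F0), (F3, F3), (F2, F2)), ((F1, F0), (F3, F3), (F3, F2))]"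
definition T4_c10 :: "(f \<times> f) vec3 list" where
  "T4_c10 = [((F1, F0), (F3, F3), (F3, F3))]"
definition T4_ps :: "(f \<times> f) vec3 list" where
  "T4_ps = T4_c0 @ T4_c1 @ T4_c2 @ T4_c3 @ T4_c4 @ T4_c5 @ T4_c6 @ T4_c7 @ T4_c8 @ T4_c9 @ T4_c10"
definition T4_tc :: "((f \<times> f) vec3 \<Rightarrow> bool) \<Rightarrow> nat" where
  "T4_tc P = cnt P T4_c0 + cnt P T4_c1 + cnt P T4_c2 + cnt P T4_c3 + cnt P T4_c4 + cnt P T4_c5 + cnt P T4_c6 + cnt P T4_c7 + cnt P T4_c8 + cnt P T4_c9 + cnt P T4_c10"

lemma T4_tc_eq: "length (filter P T4_ps) = T4_tc P"
  by (simp add: T4_ps_def T4_tc_def cnt_eq)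

lemma T4_one_chk: "\<forall>p\<in>set T4_ps. co p (idxo (F1, F0) p) = (F1, F0)"
  by code_simp

lemma T4_inj_chk: "\<forall>p\<in>set T4_ps. \<forall>q\<in>set T4_ps. q = rsF mT p (co q (idxo (F1, F0) p)) \<longrightarrow> q = p"
  by code_simp

lemma T4_dist: "distinct T4_ps"
  by code_simp

lemma T4_len: "length T4_ps = 201"
  by code_simp

lemma T4_l1: "\<forall>a\<in>set all16. \<forall>b\<in>set all16. T4_tc (\<lambda>(x,y,z). z = aF (mT a x) (mT b y)) \<le> 13"
  by code_simp
lemma T4_l2: "\<forall>a\<in>set all16. \<forall>b\<in>set all16. T4_tc (\<lambda>(x,y,z). y = aF (mT a x) (mT b z)) \<le> 13"
  by code_simp
lemma T4_l3: "\<forall>a\<in>set all16. \<forall>b\<in>set all16. T4_tc (\<lambda>(x,y,z). x = aF (mT a y) (mT b z)) \<le> 13"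
  by code_simp

lemma T4_arc: "\<exists>A. projective_arc T4 A 201 13"
proof (rule arc_transfer[OF T4_ring T4_car E_inj T4_hm T4_ha T4_one T4_zero])
  show "(F0, F1) \<noteq> (F0, F0)" by simp
  show "\<And>x. (\<exists>y. mT x y = (F1, F0) \<and> mT y x = (F1, F0)) \<or> mT x (F0, F1) = (F0, F0)" by (rule T4_cls)
  show "\<forall>p\<in>set T4_ps. co p (idxo (F1, F0) p) = (F1, F0)" by (rule T4_one_chk)
  show "\<forall>p\<in>set T4_ps. \<forall>q\<in>set T4_ps. q = rsF mT p (co q (idxo (F1, F0) p)) \<longrightarrow> q = p" by (rule T4_inj_chk)
  show "distinct T4_ps" by (rule T4_dist)
  show "length T4_ps = 201" by (rule T4_len)
  show "length (filter (\<lambda>p. co p l = aF (mT a (co p i)) (mT b (co p j))) T4_ps) \<le> 13"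
    if "(i, j, l) \<in> {(0, 1, 2), (0, 2, 1), (1, 2, 0)}" for i j l a b
    by (rule lin_from_forms[OF _ _ _ that]) (use T4_l1 T4_l2 T4_l3 in \<open>simp_all add: T4_tc_eq\<close>)
qed


lemma G4_car: "carrier G4 = range E" by (simp add: G4_def carrier_E)
lemma G4_one: "\<one>\<^bsub>G4\<^esub> = E (F1, F0)" by (simp add: G4_def E_def)
lemma G4_zero: "\<zero>\<^bsub>G4\<^esub> = E (F0, F0)" by (simp add: G4_def E_def)

lemma G4_ax_chk:
  "\<forall>x\<in>set all16. \<forall>y\<in>set all16. \<forall>w\<in>set all16. mG (mG x y) w = mG x (mG y w) \<and> aG (aG x y) w = aG x (aG y w)
     \<and> mG (aG x y) w = aG (mG x w) (mG y w) \<and> mG w (aG x y) = aG (mG w x) (mG w y)"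
  by code_simp

lemma G4_ax1_chk:
  "\<forall>x\<in>set all16. \<forall>y\<in>set all16. aG x y = aG y x \<and> mG (F1, F0) x = x \<and> mG x (F1, F0) = x \<and> aG (F0, F0) x = x \<and> aG (nG x) x = (F0, F0)"
  by code_simp

lemma G4_ring: "ring G4"
  apply (rule ring_transfer[OF G4_car G4_hm G4_ha G4_one G4_zero, where ng = "nG"])
  using G4_ax_chk G4_ax1_chk all16 by blast+

lemma G4_cls_chk: "\<forall>x\<in>set all16. (\<exists>y\<in>set all16. mG x y = (F1, F0) \<and> mG y x = (F1, F0)) \<or> mG x (F2, F0) = (F0, F0)"
  by code_simp

lemma G4_cls: "(\<exists>y. mG x y = (F1, F0) \<and> mG y x = (F1, F0)) \<or> mG x (F2, F0) = (F0, F0)"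
  using G4_cls_chk all16[of x] by blast

definition G4_c0 :: "(f \<times> f) vec3 list" where
  "G4_c0 = [((F0, F0), (F0, F2), (F1, F0)), ((F0, F0), (F1, F0), (F0, F2)), ((F0, F0), (F1, F0), (F0, F3)), ((F0, F0), (F1, F0), (F1, F0)), ((F0, F0), (F1, F0), (F1, F1)), ((F0, F0), (F1, F0), (F2, F0)), ((F0, F0), (F1, F0), (F2, F1)), ((F0, F0), (F1, F0), (F2, F3)), ((F0, F0), (F1, F0), (F3, F0)), ((F0, F0), (F1, F0), (F3, F1)), ((F0, F0), (F1, F0), (F3, F2)), ((F0, F0), (F1, F0), (F3, F3)), ((F0, F0), (F2, F2), (F1, F0)), ((F0, F2), (F0, F0), (F1, F0)), ((F0, F2), (F1, F0), (F0, F1)), ((F0, F2), (F1, F0), (F0, F3)), ((F0, F2), (F1, F0), (F1, F0)), ((F0, F2), (F1, F0), (F1, F1)), ((F0, F2), (F1, F0), (F1, F2)), ((F0, F2), (F1, F0), (F1, F3))]"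
definition G4_c1 :: "(f \<times> f) vec3 list" where
  "G4_c1 = [((F0, F2), (F1, F0), (F2, F0)), ((F0, F2), (F1, F0), (F2, F1)), ((F0, F2), (F1, F0), (F2, F2)), ((F0, F2), (F1, F0), (F3, F0)), ((F0, F2), (F1, F0), (F3, F1)), ((F0, F2), (F2, F0), (F1, F0)), ((F1, F0), (F0, F0), (F0, F2)), ((F1, F0), (F0, F0), (F0, F3)), ((F1, F0), (F0, F0), (F1, F0)), ((F1, F0), (F0, F0), (F1, F2)), ((F1, F0), (F0, F0), (F1, F3)), ((F1, F0), (F0, F0), (F2, F0)), ((F1, F0), (F0, F0), (F2, F1)), ((F1, F0), (F0, F0), (F2, F2)), ((F1, F0), (F0, F0), (F2, F3)), ((F1, F0), (F0, F0), (F3, F0)), ((F1, F0), (F0, F0), (F3, F3)), ((F1, F0), (F0, F1), (F0, F1)), ((F1, F0), (F0, F1), (F0, F2)), ((F1, F0), (F0, F1), (F0, F3))]"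
definition G4_c2 :: "(f \<times> f) vec3 list" where
  "G4_c2 = [((F1, F0), (F0, F1), (F1, F0)), ((F1, F0), (F0, F1), (F1, F1)), ((F1, F0), (F0, F1), (F1, F2)), ((F1, F0), (F0, F1), (F2, F0)), ((F1, F0), (F0, F1), (F2, F1)), ((F1, F0), (F0, F1), (F2, F2)), ((F1, F0), (F0, F1), (F3, F1)), ((F1, F0), (F0, F1), (F3, F3)), ((F1, F0), (F0, F2), (F0, F1)), ((F1, F0), (F0, F2), (F0, F2)), ((F1, F0), (F0, F2), (F0, F3)), ((F1, F0), (F0, F2), (F1, F0)), ((F1, F0), (F0, F2), (F1, F2)), ((F1, F0), (F0, F2), (F1, F3)), ((F1, F0), (F0, F2), (F2, F0)), ((F1, F0), (F0, F2), (F2, F1)), ((F1, F0), (F0, F2), (F2, F2)), ((F1, F0), (F0, F2), (F3, F0)), ((F1, F0), (F0, F2), (F3, F3)), ((F1, F0), (F0, F3), (F0, F1))]"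
definition G4_c3 :: "(f \<times> f) vec3 list" where
  "G4_c3 = [((F1, F0), (F0, F3), (F0, F2)), ((F1, F0), (F0, F3), (F1, F0)), ((F1, F0), (F0, F3), (F1, F1)), ((F1, F0), (F0, F3), (F2, F0)), ((F1, F0), (F0, F3), (F2, F1)), ((F1, F0), (F0, F3), (F2, F2)), ((F1, F0), (F0, F3), (F2, F3)), ((F1, F0), (F0, F3), (F3, F1)), ((F1, F0), (F0, F3), (F3, F3)), ((F1, F0), (F1, F0), (F0, F1)), ((F1, F0), (F1, F0), (F0, F3)), ((F1, F0), (F1, F0), (F1, F1)), ((F1, F0), (F1, F0), (F1, F3)), ((F1, F0), (F1, F0), (F2, F1)), ((F1, F0), (F1, F0), (F2, F2)), ((F1, F0), (F1, F0), (F2, F3)), ((F1, F0), (F1, F0), (F3, F1)), ((F1, F0), (F1, F0), (F3, F3)), ((F1, F0), (F1, F1), (F0, F1)), ((F1, F0), (F1, F1), (F0, F3))]"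
definition G4_c4 :: "(f \<times> f) vec3 list" where
  "G4_c4 = [((F1, F0), (F1, F1), (F1, F1)), ((F1, F0), (F1, F1), (F1, F2)), ((F1, F0), (F1, F1), (F2, F0)), ((F1, F0), (F1, F1), (F2, F1)), ((F1, F0), (F1, F1), (F2, F3)), ((F1, F0), (F1, F2), (F2, F2)), ((F1, F0), (F1, F3), (F0, F1)), ((F1, F0), (F1, F3), (F0, F3)), ((F1, F0), (F1, F3), (F1, F0)), ((F1, F0), (F1, F3), (F1, F1)), ((F1, F0), (F1, F3), (F1, F2)), ((F1, F0), (F1, F3), (F2, F1)), ((F1, F0), (F1, F3), (F2, F2)), ((F1, F0), (F1, F3), (F2, F3)), ((F1, F0), (F1, F3), (F3, F1)), ((F1, F0), (F1, F3), (F3, F2)), ((F1, F0), (F1, F3), (F3, F3)), ((F1, F0), (F2, F0), (F0, F1)), ((F1, F0), (F2, F0), (F0, F2)), ((F1, F0), (F2, F0), (F1, F0))]"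
definition G4_c5 :: "(f \<times> f) vec3 list" where
  "G4_c5 = [((F1, F0), (F2, F0), (F1, F2)), ((F1, F0), (F2, F0), (F1, F3)), ((F1, F0), (F2, F0), (F2, F0)), ((F1, F0), (F2, F0), (F2, F1)), ((F1, F0), (F2, F0), (F2, F2)), ((F1, F0), (F2, F0), (F2, F3)), ((F1, F0), (F2, F0), (F3, F0)), ((F1, F0), (F2, F1), (F0, F2)), ((F1, F0), (F2, F1), (F0, F3)), ((F1, F0), (F2, F1), (F1, F0)), ((F1, F0), (F2, F1), (F1, F1)), ((F1, F0), (F2, F1), (F1, F2)), ((F1, F0), (F2, F1), (F2, F0)), ((F1, F0), (F2, F1), (F2, F1)), ((F1, F0), (F2, F1), (F2, F2)), ((F1, F0), (F2, F1), (F2, F3)), ((F1, F0), (F2, F1), (F3, F1)), ((F1, F0), (F2, F1), (F3, F3)), ((F1, F0), (F2, F2), (F0, F1)), ((F1, F0), (F2, F2), (F0, F2))]"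
definition G4_c6 :: "(f \<times> f) vec3 list" where
  "G4_c6 = [((F1, F0), (F2, F2), (F0, F3)), ((F1, F0), (F2, F2), (F1, F0)), ((F1, F0), (F2, F2), (F1, F1)), ((F1, F0), (F2, F2), (F1, F2)), ((F1, F0), (F2, F2), (F2, F0)), ((F1, F0), (F2, F2), (F2, F2)), ((F1, F0), (F2, F2), (F2, F3)), ((F1, F0), (F2, F2), (F3, F0)), ((F1, F0), (F2, F2), (F3, F3)), ((F1, F0), (F2, F3), (F0, F1)), ((F1, F0), (F2, F3), (F0, F2)), ((F1, F0), (F2, F3), (F0, F3)), ((F1, F0), (F2, F3), (F1, F0)), ((F1, F0), (F2, F3), (F1, F1)), ((F1, F0), (F2, F3), (F2, F0)), ((F1, F0), (F2, F3), (F2, F2)), ((F1, F0), (F2, F3), (F2, F3)), ((F1, F0), (F2, F3), (F3, F0)), ((F1, F0), (F2, F3), (F3, F1)), ((F1, F0), (F2, F3), (F3, F3))]"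
definition G4_c7 :: "(f \<times> f) vec3 list" where
  "G4_c7 = [((F1, F0), (F3, F0), (F0, F1)), ((F1, F0), (F3, F0), (F0, F3)), ((F1, F0), (F3, F0), (F1, F0)), ((F1, F0), (F3, F0), (F1, F2)), ((F1, F0), (F3, F0), (F2, F0)), ((F1, F0), (F3, F0), (F2, F1)), ((F1, F0), (F3, F0), (F2, F3)), ((F1, F0), (F3, F0), (F3, F0)), ((F1, F0), (F3, F0), (F3, F2)), ((F1, F0), (F3, F1), (F0, F0)), ((F1, F0), (F3, F1), (F0, F1)), ((F1, F0), (F3, F1), (F0, F3)), ((F1, F0), (F3, F1), (F1, F1)), ((F1, F0), (F3, F1), (F1, F2)), ((F1, F0), (F3, F1), (F1, F3)), ((F1, F0), (F3, F1), (F2, F0)), ((F1, F0), (F3, F1), (F2, F1)), ((F1, F0), (F3, F1), (F2, F2)), ((F1, F0), (F3, F1), (F2, F3)), ((F1, F0), (F3, F1), (F3, F1))]"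
definition G4_c8 :: "(f \<times> f) vec3 list" where
  "G4_c8 = [((F1, F0), (F3, F2), (F1, F0)), ((F1, F0), (F3, F2), (F1, F1)), ((F1, F0), (F3, F2), (F1, F2)), ((F1, F0), (F3, F2), (F1, F3)), ((F1, F0), (F3, F2), (F2, F0)), ((F1, F0), (F3, F2), (F3, F0)), ((F1, F0), (F3, F2), (F3, F1)), ((F1, F0), (F3, F2), (F3, F2)), ((F1, F0), (F3, F2), (F3, F3)), ((F1, F0), (F3, F3), (F0, F2)), ((F1, F0), (F3, F3), (F1, F0)), ((F1, F0), (F3, F3), (F1, F2)), ((F1, F0), (F3, F3), (F2, F0)), ((F1, F0), (F3, F3), (F2, F2)), ((F1, F0), (F3, F3), (F3, F1)), ((F1, F0), (F3, F3), (F3, F2)), ((F2, F0), (F0, F2), (F1, F0)), ((F2, F0), (F1, F0), (F0, F1)), ((F2, F0), (F1, F0), (F1, F0)), ((F2, F0), (F1, F0), (F1, F1))]"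
definition G4_c9 :: "(f \<times> f) vec3 list" where
  "G4_c9 = [((F2, F0), (F1, F0), (F1, F2)), ((F2, F0), (F1, F0), (F1, F3)), ((F2, F0), (F1, F0), (F2, F0)), ((F2, F0), (F1, F0), (F2, F1)), ((F2, F0), (F1, F0), (F2, F2)), ((F2, F0), (F1, F0), (F2, F3)), ((F2, F0), (F1, F0), (F3, F2)), ((F2, F0), (F1, F0), (F3, F3)), ((F2, F0), (F2, F2), (F1, F0)), ((F2, F2), (F0, F0), (F1, F0)), ((F2, F2), (F1, F0), (F0, F1)), ((F2, F2), (F1, F0), (F0, F2)), ((F2, F2), (F1, F0), (F0, F3)), ((F2, F2), (F1, F0), (F1, F2)), ((F2, F2), (F1, F0), (F1, F3)), ((F2, F2), (F1, F0), (F2, F0)), ((F2, F2), (F1, F0), (F2, F3)), ((F2, F2), (F1, F0), (F3, F1)), ((F2, F2), (F1, F0), (F3, F2)), ((F2, F2), (F1, F0), (F3, F3))]"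
definition G4_c10 :: "(f \<times> f) vec3 list" where
  "G4_c10 = [((F2, F2), (F2, F0), (F1, F0))]"
definition G4_ps :: "(f \<times> f) vec3 list" where
  "G4_ps = G4_c0 @ G4_c1 @ G4_c2 @ G4_c3 @ G4_c4 @ G4_c5 @ G4_c6 @ G4_c7 @ G4_c8 @ G4_c9 @ G4_c10"
definition G4_tc :: "((f \<times> f) vec3 \<Rightarrow> bool) \<Rightarrow> nat" where
  "G4_tc P = cnt P G4_c0 + cnt P G4_c1 + cnt P G4_c2 + cnt P G4_c3 + cnt P G4_c4 + cnt P G4_c5 + cnt P G4_c6 + cnt P G4_c7 + cnt P G4_c8 + cnt P G4_c9 + cnt P G4_c10"

lemma G4_tc_eq: "length (filter P G4_ps) = G4_tc P"
  by (simp add: G4_ps_def G4_tc_def cnt_eq)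

lemma G4_one_chk: "\<forall>p\<in>set G4_ps. co p (idxo (F1, F0) p) = (F1, F0)"
  by code_simp

lemma G4_inj_chk: "\<forall>p\<in>set G4_ps. \<forall>q\<in>set G4_ps. q = rsF mG p (co q (idxo (F1, F0) p)) \<longrightarrow> q = p"
  by code_simp

lemma G4_dist: "distinct G4_ps"
  by code_simp

lemma G4_len: "length G4_ps = 201"
  by code_simp

lemma G4_l1: "\<forall>a\<in>set all16. \<forall>b\<in>set all16. G4_tc (\<lambda>(x,y,z). z = aG (mG a x) (mG b y)) \<le> 13"
  by code_simp
lemma G4_l2: "\<forall>a\<in>set all16. \<forall>b\<in>set all16. G4_tc (\<lambda>(x,y,z). y = aG (mG a x) (mG b z)) \<le> 13"
  by code_simp
lemma G4_l3: "\<forall>a\<in>set all16. \<forall>b\<in>set all16. G4_tc (\<lambda>(x,y,z). x = aG (mG a y) (mG b z)) \<le> 13"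
  by code_simp

lemma G4_arc: "\<exists>A. projective_arc G4 A 201 13"
proof (rule arc_transfer[OF G4_ring G4_car E_inj G4_hm G4_ha G4_one G4_zero])
  show "(F2, F0) \<noteq> (F0, F0)" by simp
  show "\<And>x. (\<exists>y. mG x y = (F1, F0) \<and> mG y x = (F1, F0)) \<or> mG x (F2, F0) = (F0, F0)" by (rule G4_cls)
  show "\<forall>p\<in>set G4_ps. co p (idxo (F1, F0) p) = (F1, F0)" by (rule G4_one_chk)
  show "\<forall>p\<in>set G4_ps. \<forall>q\<in>set G4_ps. q = rsF mG p (co q (idxo (F1, F0) p)) \<longrightarrow> q = p" by (rule G4_inj_chk)
  show "distinct G4_ps" by (rule G4_dist)
  show "length G4_ps = 201" by (rule G4_len)
  show "length (filter (\<lambda>p. co p l = aG (mG a (co p i)) (mG b (co p j))) G4_ps) \<le> 13"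
    if "(i, j, l) \<in> {(0, 1, 2), (0, 2, 1), (1, 2, 0)}" for i j l a b
    by (rule lin_from_forms[OF _ _ _ that]) (use G4_l1 G4_l2 G4_l3 in \<open>simp_all add: G4_tc_eq\<close>)
qed

theorem theorem3p8:
  shows "\<forall>R \<in> {G4, S4, T4}. \<exists>A. projective_arc R A 201 13"
  using G4_arc S4_arc T4_arc by blast

end
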